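(* Let $D$ be a square-free integer, let $\mathbb{Z}[\sqrt{D}]$ denote the ring of integers of $\mathbb{Q}(\sqrt{D})$, and let $p$ be a prime integer which is irreducible but not prime in $\mathbb{Z}[\sqrt{D}]$. Let $z\in I_p(D)$. Then (1) $p$ divides $\lVert z\rVert$ in $\mathbb{Z}$, and (2) $\bar{z}\in I_p(D)$. Moreover, for any integer $t\in\mathbb{Z}$, $(\mathbb{Z}\cup R^*\cup tR^* )\cap I_p(D)=\emptyset$, where $R^*=\mathbb{Z}[\sqrt{D}]^{\times}$ is the unit group and $tR^*=\{tu: u\in R^*\}$.
   Context: Here $\mathbb{Z}[\sqrt{D}]=\{a+b\sqrt{D}:a,b\in\mathbb{Z}\}$ if $D\equiv 2,3 \pmod 4$ and $\mathbb{Z}[\sqrt{D}]=\{\frac{a+b\sqrt{D}}{2}:a,b\in\mathbb{Z},\ a\equiv b \pmod 2\}$ if $D\equiv 1\pmod 4$. For $z=x+y\sqrt{D}$ (with $x,y\in\mathbb{Q}$), $\bar z=x-y\sqrt{D}$ is its conjugate and $\lVert z\rVert=z\bar z$ its norm. $\langle a_1,\dots,a_k\rangle$ denotes the ideal generated by $a_1,\dots,a_k$. $I_p(D)$ is the set of all non-unit $z\in\mathbb{Z}[\sqrt{D}]$ such that $z\notin\langle p\rangle$ but there exists $m\in\mathbb{Z}[\sqrt{D}]$ with $m\notin\langle p\rangle$ and $zm\in\langle p\rangle$. *)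

theory Defs
  imports "HOL-Algebra.Ring_Divisibility" "HOL-Algebra.Ideal"
          "HOL-Computational_Algebra.Squarefree"
begin

text \<open>Elements of the quadratic field Q(sqrt D) are represented as pairs (x, y) of
  rationals, standing for x + y sqrt D.\<close>

definition qint_carrier :: "int \<Rightarrow> (rat \<times> rat) set" where
  "qint_carrier D =
     (if D mod 4 = 1
      then {(of_int a / 2, of_int b / 2) | a b :: int. a mod 2 = b mod 2}
      else {(of_int a, of_int b) | a b :: int. True})"

definition ZD :: "int \<Rightarrow> (rat \<times> rat) ring" where
  "ZD D = \<lparr> carrier = qint_carrier D,
            monoid.mult = (\<lambda>(a, b) (c, d). (a * c + of_int D * b * d, a * d + b * c)),
            one = (1, 0),
            zero = (0, 0),
            add = (\<lambda>(a, b) (c, d). (a + c, b + d)) \<rparr>"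

definition qconj :: "rat \<times> rat \<Rightarrow> rat \<times> rat" where
  "qconj z = (fst z, - snd z)"

definition qnorm :: "int \<Rightarrow> rat \<times> rat \<Rightarrow> rat" where
  "qnorm D z = fst z ^ 2 - of_int D * snd z ^ 2"

definition qof_int :: "int \<Rightarrow> rat \<times> rat" where
  "qof_int t = (of_int t, 0)"

definition Ip :: "int \<Rightarrow> int \<Rightarrow> (rat \<times> rat) set" where
  "Ip D p = {z \<in> carrier (ZD D). z \<notin> Units (ZD D) \<and> z \<notin> PIdl\<^bsub>ZD D\<^esub> (qof_int p) \<and>
      (\<exists>m \<in> carrier (ZD D). m \<notin> PIdl\<^bsub>ZD D\<^esub> (qof_int p) \<and>
         z \<otimes>\<^bsub>ZD D\<^esub> m \<in> PIdl\<^bsub>ZD D\<^esub> (qof_int p))}"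

end

theory Submission
  imports Defs
begin

lemma mult_ZD: "x \<otimes>\<^bsub>ZD D\<^esub> y = (fst x * fst y + of_int D * snd x * snd y, fst x * snd y + snd x * fst y)"
  by (cases x, cases y) (simp add: ZD_def)

lemma carrier_ZD: "carrier (ZD D) = qint_carrier D"
  by (simp add: ZD_def)

lemma one_ZD: "\<one>\<^bsub>ZD D\<^esub> = (1, 0)"
  by (simp add: ZD_def)

lemma carrier_intro1:
  assumes "D mod 4 = 1" "a mod 2 = b mod 2"
  shows "(of_int a / 2, of_int b / 2) \<in> carrier (ZD D)"
  using assms unfolding carrier_ZD qint_carrier_def by auto

lemma carrier_intro2:
  assumes "D mod 4 \<noteq> 1"
  shows "(of_int a, of_int b) \<in> carrier (ZD D)"
  using assms unfolding carrier_ZD qint_carrier_def by auto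

lemma lin_closed:
  assumes "z \<in> carrier (ZD D)" "w \<in> carrier (ZD D)"
  shows "(of_int k * fst z + of_int l * fst w, of_int k * snd z + of_int l * snd w) \<in> carrier (ZD D)"
proof (cases "D mod 4 = 1")
  case True
  from assms True obtain a b c d :: int where z: "z = (of_int a / 2, of_int b / 2)" and ab: "a mod 2 = b mod 2"
    and w: "w = (of_int c / 2, of_int d / 2)" and cd: "c mod 2 = d mod 2"
    by (auto simp: carrier_ZD qint_carrier_def)
  have "(k*a + l*c) mod 2 = (k*b + l*d) mod 2" using ab cd
    by (metis mod_add_cong mod_mult_right_eq)
  moreover have "(of_int k * fst z + of_int l * fst w, of_int k * snd z + of_int l * snd w)
     = (of_int (k*a + l*c) / 2, of_int (k*b+l*d) / 2)" using z w by (simp add: field_simps)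
  ultimately show ?thesis using True by (metis carrier_intro1)
next
  case False
  from assms False obtain a b c d :: int where z: "z = (of_int a, of_int b)"
    and w: "w = (of_int c, of_int d)"
    by (auto simp: carrier_ZD qint_carrier_def)
  have "(of_int k * fst z + of_int l * fst w, of_int k * snd z + of_int l * snd w)
     = (of_int (k*a + l*c), of_int (k*b+l*d))" using z w by (simp add: field_simps)
  then show ?thesis using False by (metis carrier_intro2)
qed

lemma mult_closed:
  assumes "z \<in> carrier (ZD D)" "w \<in> carrier (ZD D)"
  shows "z \<otimes>\<^bsub>ZD D\<^esub> w \<in> carrier (ZD D)"
proof (cases "D mod 4 = 1")
  case True
  from assms True obtain a b c d :: int where z: "z = (of_int a / 2, of_int b / 2)" and ab: "a mod 2 = b mod 2"
    and w: "w = (of_int c / 2, of_int d / 2)" and cd: "c mod 2 = d mod 2"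
    by (auto simp: carrier_ZD qint_carrier_def)
  obtain r where r: "a = b + 2*r" using ab by (metis add.commute mod_mult_div_eq mod_eq_dvd_iff dvd_def diff_add_cancel)
  obtain s where s: "c = d + 2*s" using cd by (metis mod_eq_dvd_iff dvd_def diff_add_cancel add.commute)
  obtain q where q: "D = 1 + 4*q" using True by (metis add.commute mod_mult_div_eq)
  define A where "A = b*d + 2*q*b*d + r*d + b*s + 2*r*s"
  define B where "B = b*d + b*s + r*d"
  have e1: "a*c + D*b*d = 2*A" unfolding A_def r s q by (simp add: algebra_simps)
  have e2: "a*d + b*c = 2*B" unfolding B_def r s by (simp add: algebra_simps)
  have AB: "A mod 2 = B mod 2"
  proof -
    define X where "X = q*b*d + r*s"
    have "A = B + 2*X" unfolding A_def B_def X_def by (simp add: algebra_simps)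
    then show ?thesis by presburger
  qed
  have "z \<otimes>\<^bsub>ZD D\<^esub> w = (of_int (a*c + D*b*d) / 4, of_int (a*d + b*c) / 4)"
    using z w by (simp add: mult_ZD field_simps)
  also have "\<dots> = (of_int A / 2, of_int B / 2)" by (simp add: e1 e2)
  finally show ?thesis using True AB by (metis carrier_intro1)
next
  case False
  from assms False obtain a b c d :: int where z: "z = (of_int a, of_int b)"
    and w: "w = (of_int c, of_int d)"
    by (auto simp: carrier_ZD qint_carrier_def)
  have "z \<otimes>\<^bsub>ZD D\<^esub> w = (of_int (a*c + D*b*d), of_int (a*d+b*c))"
    using z w by (simp add: mult_ZD)
  then show ?thesis using False by (metis carrier_intro2)
qed

lemma conj_closed:
  assumes "z \<in> carrier (ZD D)" shows "qconj z \<in> carrier (ZD D)"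
proof (cases "D mod 4 = 1")
  case True
  from assms True obtain a b :: int where z: "z = (of_int a / 2, of_int b / 2)" and ab: "a mod 2 = b mod 2"
    by (auto simp: carrier_ZD qint_carrier_def)
  have "qconj z = (of_int a / 2, of_int (-b) / 2)" using z by (simp add: qconj_def)
  moreover have "a mod 2 = (-b) mod 2" using ab by (simp add: zmod_zminus1_eq_if)
  ultimately show ?thesis using True by (metis carrier_intro1)
next
  case False
  from assms False obtain a b :: int where z: "z = (of_int a, of_int b)"
    by (auto simp: carrier_ZD qint_carrier_def)
  have "qconj z = (of_int a, of_int (-b))" using z by (simp add: qconj_def)
  then show ?thesis using False by (metis carrier_intro2)
qed

lemma qof_int_closed: "qof_int t \<in> carrier (ZD D)"
proof (cases "D mod 4 = 1")
  case True
  have "qof_int t = (of_int (2*t) / 2, of_int 0 / 2)" by (simp add: qof_int_def)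
  moreover have "(2*t) mod 2 = (0::int) mod 2" by simp
  ultimately show ?thesis using True by (metis carrier_intro1)
next
  case False
  then show ?thesis unfolding qof_int_def using carrier_intro2[of D t 0] by simp
qed

lemma norm_int:
  assumes "z \<in> carrier (ZD D)" shows "\<exists>n. qnorm D z = of_int n"
proof (cases "D mod 4 = 1")
  case True
  from assms True obtain a b :: int where z: "z = (of_int a / 2, of_int b / 2)" and ab: "a mod 2 = b mod 2"
    by (auto simp: carrier_ZD qint_carrier_def)
  obtain r where r: "a = b + 2*r" using ab by (metis mod_eq_dvd_iff dvd_def diff_add_cancel add.commute)
  obtain q where q: "D = 1 + 4*q" using True by (metis add.commute mod_mult_div_eq)
  have e: "a^2 - D*b^2 = 4*(r*b + r^2 - q*b^2)" unfolding r q by (simp add: algebra_simps power2_eq_square)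
  have "qnorm D z = of_int (a^2 - D*b^2) / 4" using z by (simp add: qnorm_def field_simps power2_eq_square)
  also have "\<dots> = of_int (r*b + r^2 - q*b^2)" by (simp add: e)
  finally show ?thesis by blast
next
  case False
  from assms False obtain a b :: int where z: "z = (of_int a, of_int b)"
    by (auto simp: carrier_ZD qint_carrier_def)
  have "qnorm D z = of_int (a^2 - D*b^2)" using z by (simp add: qnorm_def)
  then show ?thesis by blast
qed

lemma PIdl_iff: "m \<in> PIdl\<^bsub>ZD D\<^esub> (qof_int p) \<longleftrightarrow>
   (\<exists>x \<in> carrier (ZD D). m = (of_int p * fst x, of_int p * snd x))"
proof
  assume "m \<in> PIdl\<^bsub>ZD D\<^esub> (qof_int p)"
  then obtain x where "x \<in> carrier (ZD D)" "m = x \<otimes>\<^bsub>ZD D\<^esub> qof_int p"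
    unfolding cgenideal_def by blast
  then show "\<exists>x \<in> carrier (ZD D). m = (of_int p * fst x, of_int p * snd x)"
    by (intro bexI[of _ x]) (auto simp: mult_ZD qof_int_def mult.commute)
next
  assume "\<exists>x \<in> carrier (ZD D). m = (of_int p * fst x, of_int p * snd x)"
  then obtain x where "x \<in> carrier (ZD D)" "m = (of_int p * fst x, of_int p * snd x)" by blast
  moreover then have "m = x \<otimes>\<^bsub>ZD D\<^esub> qof_int p"
    by (auto simp: mult_ZD qof_int_def mult.commute)
  ultimately show "m \<in> PIdl\<^bsub>ZD D\<^esub> (qof_int p)" unfolding cgenideal_def by blast
qed

lemma mult_assoc_ZD: "(x \<otimes>\<^bsub>ZD D\<^esub> y) \<otimes>\<^bsub>ZD D\<^esub> z = x \<otimes>\<^bsub>ZD D\<^esub> (y \<otimes>\<^bsub>ZD D\<^esub> z)"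
  by (simp add: mult_ZD algebra_simps)

lemma mult_comm_ZD: "x \<otimes>\<^bsub>ZD D\<^esub> y = y \<otimes>\<^bsub>ZD D\<^esub> x"
  by (simp add: mult_ZD algebra_simps)

lemma P_mult:
  assumes "a \<in> PIdl\<^bsub>ZD D\<^esub> (qof_int p)" "b \<in> carrier (ZD D)"
  shows "b \<otimes>\<^bsub>ZD D\<^esub> a \<in> PIdl\<^bsub>ZD D\<^esub> (qof_int p)"
proof -
  from assms(1) obtain x where x: "x \<in> carrier (ZD D)" "a = (of_int p * fst x, of_int p * snd x)"
    by (auto simp: PIdl_iff)
  have "b \<otimes>\<^bsub>ZD D\<^esub> x \<in> carrier (ZD D)" using x assms(2) mult_closed by blast
  moreover have "b \<otimes>\<^bsub>ZD D\<^esub> a = (of_int p * fst (b \<otimes>\<^bsub>ZD D\<^esub> x), of_int p * snd (b \<otimes>\<^bsub>ZD D\<^esub> x))"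
    using x by (simp add: mult_ZD algebra_simps)
  ultimately show ?thesis by (auto simp: PIdl_iff)
qed

lemma conj_mult: "qconj (x \<otimes>\<^bsub>ZD D\<^esub> y) = qconj x \<otimes>\<^bsub>ZD D\<^esub> qconj y"
  by (simp add: mult_ZD qconj_def algebra_simps)

lemma conj_conj: "qconj (qconj x) = x"
  by (simp add: qconj_def)

lemma conj_P:
  assumes "a \<in> PIdl\<^bsub>ZD D\<^esub> (qof_int p)"
  shows "qconj a \<in> PIdl\<^bsub>ZD D\<^esub> (qof_int p)"
proof -
  from assms obtain x where x: "x \<in> carrier (ZD D)" "a = (of_int p * fst x, of_int p * snd x)"
    by (auto simp: PIdl_iff)
  have "qconj x \<in> carrier (ZD D)" using x conj_closed by blast
  moreover have "qconj a = (of_int p * fst (qconj x), of_int p * snd (qconj x))"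
    using x by (simp add: qconj_def)
  ultimately show ?thesis by (auto simp: PIdl_iff)
qed

lemma conj_unit:
  assumes "qconj z \<in> Units (ZD D)" shows "z \<in> Units (ZD D)"
proof -
  from assms obtain x where x: "x \<in> carrier (ZD D)" "x \<otimes>\<^bsub>ZD D\<^esub> qconj z = \<one>\<^bsub>ZD D\<^esub>"
    "qconj z \<otimes>\<^bsub>ZD D\<^esub> x = \<one>\<^bsub>ZD D\<^esub>" and zc: "qconj z \<in> carrier (ZD D)"
    unfolding Units_def by blast
  have zc': "z \<in> carrier (ZD D)" using conj_closed[OF zc] by (simp add: conj_conj)
  have c1: "qconj (\<one>\<^bsub>ZD D\<^esub>) = \<one>\<^bsub>ZD D\<^esub>" by (simp add: one_ZD qconj_def)
  have "qconj x \<otimes>\<^bsub>ZD D\<^esub> z = \<one>\<^bsub>ZD D\<^esub>"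
    using arg_cong[OF x(2), of qconj] by (simp add: conj_mult conj_conj c1)
  moreover have "z \<otimes>\<^bsub>ZD D\<^esub> qconj x = \<one>\<^bsub>ZD D\<^esub>"
    using arg_cong[OF x(3), of qconj] by (simp add: conj_mult conj_conj c1)
  ultimately show ?thesis using zc' conj_closed[OF x(1)] unfolding Units_def by blast
qed

lemma int_notin:
  fixes p s :: int
  assumes p: "prime p" and m: "m \<in> carrier (ZD D)" "m \<notin> PIdl\<^bsub>ZD D\<^esub> (qof_int p)"
    and sm: "qof_int s \<otimes>\<^bsub>ZD D\<^esub> m \<in> PIdl\<^bsub>ZD D\<^esub> (qof_int p)"
    and s: "qof_int s \<notin> PIdl\<^bsub>ZD D\<^esub> (qof_int p)"
  shows False
proof -
  have "\<not> p dvd s"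
  proof
    assume "p dvd s"
    then obtain k where k: "s = p * k" by blast
    have "qof_int s = (of_int p * fst (qof_int k), of_int p * snd (qof_int k))"
      by (simp add: qof_int_def k)
    then show False using s qof_int_closed by (auto simp: PIdl_iff)
  qed
  then have "coprime p s" using p prime_imp_coprime by blast
  then obtain u v where uv: "u * p + v * s = 1" using bezout_int[of p s] by (metis coprime_iff_gcd_eq_1)
  from sm obtain w where w: "w \<in> carrier (ZD D)"
    "qof_int s \<otimes>\<^bsub>ZD D\<^esub> m = (of_int p * fst w, of_int p * snd w)" by (auto simp: PIdl_iff)
  obtain m1 m2 where m12: "m = (m1, m2)" by fastforce
  obtain w1 w2 where w12: "w = (w1, w2)" by fastforce
  have h1: "of_int s * m1 = of_int p * w1" and h2: "of_int s * m2 = of_int p * w2"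
    using w(2) by (simp_all add: m12 w12 mult_ZD qof_int_def)
  have uvq: "of_int u * of_int p + of_int v * of_int s = (1::rat)"
    using arg_cong[OF uv, of "of_int :: int \<Rightarrow> rat"] by simp
  define y where "y = (of_int u * fst m + of_int v * fst w, of_int u * snd m + of_int v * snd w)"
  have yc: "y \<in> carrier (ZD D)" unfolding y_def using lin_closed[OF m(1) w(1)] by blast
  have "m1 = of_int p * (of_int u * m1 + of_int v * w1)"
  proof -
    have "of_int p * (of_int u * m1 + of_int v * w1) = (of_int u * of_int p + of_int v * of_int s) * m1"
      using h1 by (simp add: algebra_simps)
    then show ?thesis using uvq by simp
  qed
  moreover have "m2 = of_int p * (of_int u * m2 + of_int v * w2)"
  proof -
    have "of_int p * (of_int u * m2 + of_int v * w2) = (of_int u * of_int p + of_int v * of_int s) * m2"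
      using h2 by (simp add: algebra_simps)
    then show ?thesis using uvq by simp
  qed
  ultimately have "m = (of_int p * fst y, of_int p * snd y)" by (simp add: y_def m12 w12)
  then show False using m(2) yc by (auto simp: PIdl_iff)
qed

lemma norm_part:
  fixes p :: int
  assumes p: "prime p" and z: "z \<in> Ip D p"
  shows "\<exists>k :: int. qnorm D z = of_int (p * k)"
proof -
  from z obtain m where zc: "z \<in> carrier (ZD D)" and m: "m \<in> carrier (ZD D)"
    "m \<notin> PIdl\<^bsub>ZD D\<^esub> (qof_int p)" and zm: "z \<otimes>\<^bsub>ZD D\<^esub> m \<in> PIdl\<^bsub>ZD D\<^esub> (qof_int p)"
    unfolding Ip_def by blast
  obtain n where n: "qnorm D z = of_int n" using norm_int[OF zc] by blast
  have "p dvd n"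
  proof (rule ccontr)
    assume "\<not> p dvd n"
    then have "coprime p n" using p prime_imp_coprime by blast
    then obtain u v where uv: "u * p + v * n = 1" using bezout_int[of p n] by (metis coprime_iff_gcd_eq_1)
    have uvq: "of_int u * of_int p + of_int v * of_int n = (1::rat)"
      using arg_cong[OF uv, of "of_int :: int \<Rightarrow> rat"] by simp
    from zm obtain w where w: "w \<in> carrier (ZD D)"
      "z \<otimes>\<^bsub>ZD D\<^esub> m = (of_int p * fst w, of_int p * snd w)" by (auto simp: PIdl_iff)
    obtain x1 x2 where z12: "z = (x1, x2)" by fastforce
    obtain m1 m2 where m12: "m = (m1, m2)" by fastforce
    obtain w1 w2 where w12: "w = (w1, w2)" by fastforce
    have h1: "x1 * m1 + of_int D * x2 * m2 = of_int p * w1" and h2: "x1 * m2 + x2 * m1 = of_int p * w2"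
      using w(2) by (simp_all add: z12 m12 w12 mult_ZD)
    have nq: "x1^2 - of_int D * x2^2 = of_int n" using n by (simp add: qnorm_def z12)
    define c where "c = qconj z \<otimes>\<^bsub>ZD D\<^esub> w"
    have cc: "c \<in> carrier (ZD D)" unfolding c_def using mult_closed conj_closed zc w(1) by blast
    have c12: "c = (x1 * w1 - of_int D * x2 * w2, x1 * w2 - x2 * w1)"
      by (simp add: c_def mult_ZD qconj_def z12 w12)
    define y where "y = (of_int u * fst m + of_int v * fst c, of_int u * snd m + of_int v * snd c)"
    have yc: "y \<in> carrier (ZD D)" unfolding y_def using lin_closed[OF m(1) cc] by blast
    have e1: "of_int p * (x1 * w1 - of_int D * x2 * w2) = of_int n * m1"
    proof -
      have "of_int p * (x1 * w1 - of_int D * x2 * w2) = x1 * (of_int p * w1) - of_int D * x2 * (of_int p * w2)"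
        by (simp add: algebra_simps)
      also have "\<dots> = (x1^2 - of_int D * x2^2) * m1" unfolding h1[symmetric] h2[symmetric]
        by (simp add: algebra_simps power2_eq_square)
      finally show ?thesis using nq by simp
    qed
    have e2: "of_int p * (x1 * w2 - x2 * w1) = of_int n * m2"
    proof -
      have "of_int p * (x1 * w2 - x2 * w1) = x1 * (of_int p * w2) - x2 * (of_int p * w1)"
        by (simp add: algebra_simps)
      also have "\<dots> = (x1^2 - of_int D * x2^2) * m2" unfolding h1[symmetric] h2[symmetric]
        by (simp add: algebra_simps power2_eq_square)
      finally show ?thesis using nq by simp
    qed
    have "m1 = of_int p * (of_int u * m1 + of_int v * (x1 * w1 - of_int D * x2 * w2))"
    proof -
      have "of_int p * (of_int u * m1 + of_int v * (x1 * w1 - of_int D * x2 * w2))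
          = of_int u * of_int p * m1 + of_int v * (of_int p * (x1 * w1 - of_int D * x2 * w2))"
        by (simp add: algebra_simps)
      also have "\<dots> = (of_int u * of_int p + of_int v * of_int n) * m1" unfolding e1
        by (simp add: algebra_simps)
      finally show ?thesis using uvq by simp
    qed
    moreover have "m2 = of_int p * (of_int u * m2 + of_int v * (x1 * w2 - x2 * w1))"
    proof -
      have "of_int p * (of_int u * m2 + of_int v * (x1 * w2 - x2 * w1))
          = of_int u * of_int p * m2 + of_int v * (of_int p * (x1 * w2 - x2 * w1))"
        by (simp add: algebra_simps)
      also have "\<dots> = (of_int u * of_int p + of_int v * of_int n) * m2" unfolding e2
        by (simp add: algebra_simps)
      finally show ?thesis using uvq by simp
    qed
    ultimately have "m = (of_int p * fst y, of_int p * snd y)" by (simp add: y_def m12 c12)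
    then show False using m(2) yc by (auto simp: PIdl_iff)
  qed
  then obtain k where "n = p * k" by blast
  then show ?thesis using n by blast
qed

lemma conj_part:
  assumes z: "z \<in> Ip D p"
  shows "qconj z \<in> Ip D p"
proof -
  from z obtain m where zc: "z \<in> carrier (ZD D)" and zu: "z \<notin> Units (ZD D)"
    and zp: "z \<notin> PIdl\<^bsub>ZD D\<^esub> (qof_int p)" and m: "m \<in> carrier (ZD D)"
    "m \<notin> PIdl\<^bsub>ZD D\<^esub> (qof_int p)" and zm: "z \<otimes>\<^bsub>ZD D\<^esub> m \<in> PIdl\<^bsub>ZD D\<^esub> (qof_int p)"
    unfolding Ip_def by blast
  have "qconj z \<in> carrier (ZD D)" using conj_closed zc by blast
  moreover have "qconj z \<notin> Units (ZD D)" using conj_unit zu by blast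
  moreover have "qconj z \<notin> PIdl\<^bsub>ZD D\<^esub> (qof_int p)" using conj_P[of "qconj z" D p] zp by (auto simp: conj_conj)
  moreover have "qconj m \<in> carrier (ZD D)" using conj_closed m(1) by blast
  moreover have "qconj m \<notin> PIdl\<^bsub>ZD D\<^esub> (qof_int p)" using conj_P[of "qconj m" D p] m(2) by (auto simp: conj_conj)
  moreover have "qconj z \<otimes>\<^bsub>ZD D\<^esub> qconj m \<in> PIdl\<^bsub>ZD D\<^esub> (qof_int p)"
    using conj_P[OF zm] by (simp add: conj_mult)
  ultimately show ?thesis unfolding Ip_def by blast
qed

lemma int_part:
  fixes p s :: int
  assumes p: "prime p"
  shows "qof_int s \<notin> Ip D p"
  using int_notin[OF p] unfolding Ip_def by blast

lemma tunit_part: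
  fixes p t :: int
  assumes p: "prime p" and u: "u \<in> Units (ZD D)"
  shows "qof_int t \<otimes>\<^bsub>ZD D\<^esub> u \<notin> Ip D p"
proof
  assume "qof_int t \<otimes>\<^bsub>ZD D\<^esub> u \<in> Ip D p"
  then obtain m where tp: "qof_int t \<otimes>\<^bsub>ZD D\<^esub> u \<notin> PIdl\<^bsub>ZD D\<^esub> (qof_int p)" and m: "m \<in> carrier (ZD D)"
    "m \<notin> PIdl\<^bsub>ZD D\<^esub> (qof_int p)" and zm: "(qof_int t \<otimes>\<^bsub>ZD D\<^esub> u) \<otimes>\<^bsub>ZD D\<^esub> m \<in> PIdl\<^bsub>ZD D\<^esub> (qof_int p)"
    unfolding Ip_def by blast
  from u obtain u' where uc: "u \<in> carrier (ZD D)" and u': "u' \<in> carrier (ZD D)" "u' \<otimes>\<^bsub>ZD D\<^esub> u = \<one>\<^bsub>ZD D\<^esub>"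
    unfolding Units_def by blast
  have umc: "u \<otimes>\<^bsub>ZD D\<^esub> m \<in> carrier (ZD D)" using mult_closed uc m(1) by blast
  have um: "u \<otimes>\<^bsub>ZD D\<^esub> m \<notin> PIdl\<^bsub>ZD D\<^esub> (qof_int p)"
  proof
    assume "u \<otimes>\<^bsub>ZD D\<^esub> m \<in> PIdl\<^bsub>ZD D\<^esub> (qof_int p)"
    then have "u' \<otimes>\<^bsub>ZD D\<^esub> (u \<otimes>\<^bsub>ZD D\<^esub> m) \<in> PIdl\<^bsub>ZD D\<^esub> (qof_int p)" using P_mult u'(1) by blast
    moreover have "u' \<otimes>\<^bsub>ZD D\<^esub> (u \<otimes>\<^bsub>ZD D\<^esub> m) = m"
      by (simp add: mult_assoc_ZD[symmetric] u'(2)) (simp add: one_ZD mult_ZD)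
    ultimately show False using m(2) by simp
  qed
  have ts: "qof_int t \<notin> PIdl\<^bsub>ZD D\<^esub> (qof_int p)"
  proof
    assume "qof_int t \<in> PIdl\<^bsub>ZD D\<^esub> (qof_int p)"
    then have "u \<otimes>\<^bsub>ZD D\<^esub> qof_int t \<in> PIdl\<^bsub>ZD D\<^esub> (qof_int p)" using P_mult uc by blast
    then show False using tp by (simp add: mult_comm_ZD)
  qed
  have "qof_int t \<otimes>\<^bsub>ZD D\<^esub> (u \<otimes>\<^bsub>ZD D\<^esub> m) \<in> PIdl\<^bsub>ZD D\<^esub> (qof_int p)"
    using zm by (simp add: mult_assoc_ZD)
  then show False using int_notin[OF p umc um _ ts] by blast
qed

theorem proposition2p2:
  fixes D p :: int
  assumes "squarefree D" and "D \<noteq> 1"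
    and "Factorial_Ring.prime p"
    and "ring_irreducible\<^bsub>ZD D\<^esub> (qof_int p)"
    and "\<not> ring_prime\<^bsub>ZD D\<^esub> (qof_int p)"
  shows "(\<forall>z \<in> Ip D p. (\<exists>k :: int. qnorm D z = of_int (p * k)) \<and> qconj z \<in> Ip D p)
       \<and> (\<forall>t :: int. (range qof_int \<union> Units (ZD D)
              \<union> {qof_int t \<otimes>\<^bsub>ZD D\<^esub> u | u. u \<in> Units (ZD D)}) \<inter> Ip D p = {})"
proof (intro conjI ballI allI)
  fix z assume "z \<in> Ip D p"
  then show "\<exists>k :: int. qnorm D z = of_int (p * k)" using norm_part assms(3) by blast
next
  fix z assume "z \<in> Ip D p"
  then show "qconj z \<in> Ip D p" using conj_part by blast
next
  fix t :: int
  have "Units (ZD D) \<inter> Ip D p = {}" unfolding Ip_def by blast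
  then show "(range qof_int \<union> Units (ZD D)
              \<union> {qof_int t \<otimes>\<^bsub>ZD D\<^esub> u | u. u \<in> Units (ZD D)}) \<inter> Ip D p = {}"
    using int_part[OF assms(3)] tunit_part[OF assms(3)] by blast
qed

end
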